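(* Let $\mathcal{A}=(Q,\Sigma,Q_I,\delta,\mathbb{C})$ be a parity tree automaton and $q\in Q$ a useful state. Then $da(\mathcal{A})\ge da(\mathcal{A}_q)$.
   Context: A parity tree automaton (PTA) $\mathcal{A}=(Q,\Sigma,Q_I,\delta,\mathbb{C})$ has $Q$ finite, $Q_I\subseteq Q$, $\delta\subseteq Q\times\Sigma\times Q\times Q$, $\mathbb{C}:Q\to\mathbb{N}$; a computation on $t:\{l,r\}^*\to\Sigma$ is $\phi:\{l,r\}^*\to Q$ with $\phi(\epsilon)\in Q_I$, $(\phi(v),t(v),\phi(vl),\phi(vr))\in\delta$ for all $v$, accepting if on every branch the largest color seen infinitely often is even; $ACC(\mathcal{A},t)$ is the set of accepting computations, $L(\mathcal{A})$ the trees having one. $\mathcal{A}_q$ is $\mathcal{A}$ with initial state set replaced by $\{q\}$. A state $q$ is useful if there exist $t\in L(\mathcal{A})$, $\phi\in ACC(\mathcal{A},t)$ and a node $v$ with $\phi(v)=q$. Degree of ambiguity $da(\mathcal{A})$: $k$ if $|ACC(\mathcal{A},t)|\le k$ for all $t$ and either $k=1$ or this fails for $k-1$; "finite" if all $ACC(\mathcal{A},t)$ are finite but no uniform bound exists; $\aleph_0$ if all are countable but not all finite; $2^{\aleph_0}$ otherwise; ordered $1<2<\dots<\text{finite}<\aleph_0<2^{\aleph_0}$. *)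

theory Defs
  imports Main "HOL-Library.Countable_Set"
begin

datatype dir = L | R

type_synonym node = "dir list"

record ('q, 'a) pta =
  states   :: "'q set"
  alphabet :: "'a set"
  initial  :: "'q set"
  delta    :: "('q \<times> 'a \<times> 'q \<times> 'q) set"
  color    :: "'q \<Rightarrow> nat"

definition pta_wf :: "('q, 'a) pta \<Rightarrow> bool" where
  "pta_wf A \<longleftrightarrow> finite (states A) \<and> initial A \<subseteq> states A \<and>
     delta A \<subseteq> states A \<times> alphabet A \<times> states A \<times> states A"

definition is_tree :: "('q, 'a) pta \<Rightarrow> (node \<Rightarrow> 'a) \<Rightarrow> bool" where
  "is_tree A t \<longleftrightarrow> (\<forall>v. t v \<in> alphabet A)"

definition is_computation :: "('q, 'a) pta \<Rightarrow> (node \<Rightarrow> 'a) \<Rightarrow> (node \<Rightarrow> 'q) \<Rightarrow> bool" where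
  "is_computation A t \<phi> \<longleftrightarrow> (\<forall>v. \<phi> v \<in> states A) \<and> \<phi> [] \<in> initial A \<and>
     (\<forall>v. (\<phi> v, t v, \<phi> (v @ [L]), \<phi> (v @ [R])) \<in> delta A)"

definition branch_node :: "(nat \<Rightarrow> dir) \<Rightarrow> nat \<Rightarrow> node" where
  "branch_node \<pi> n = map \<pi> [0..<n]"

definition accepting :: "('q, 'a) pta \<Rightarrow> (node \<Rightarrow> 'q) \<Rightarrow> bool" where
  "accepting A \<phi> \<longleftrightarrow> (\<forall>\<pi> :: nat \<Rightarrow> dir.
     \<exists>c. even c \<and> (\<exists>\<^sub>\<infinity>n. color A (\<phi> (branch_node \<pi> n)) = c) \<and>
         (\<forall>d. (\<exists>\<^sub>\<infinity>n. color A (\<phi> (branch_node \<pi> n)) = d) \<longrightarrow> d \<le> c))"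

definition ACC :: "('q, 'a) pta \<Rightarrow> (node \<Rightarrow> 'a) \<Rightarrow> (node \<Rightarrow> 'q) set" where
  "ACC A t = {\<phi>. is_computation A t \<phi> \<and> accepting A \<phi>}"

definition lang :: "('q, 'a) pta \<Rightarrow> (node \<Rightarrow> 'a) set" where
  "lang A = {t. is_tree A t \<and> ACC A t \<noteq> {}}"

definition restrict_init :: "('q, 'a) pta \<Rightarrow> 'q \<Rightarrow> ('q, 'a) pta" where
  "restrict_init A q = A\<lparr>initial := {q}\<rparr>"

definition useful :: "('q, 'a) pta \<Rightarrow> 'q \<Rightarrow> bool" where
  "useful A q \<longleftrightarrow> (\<exists>t \<in> lang A. \<exists>\<phi> \<in> ACC A t. \<exists>v. \<phi> v = q)"

datatype degree = DFin nat | DFinite | DAleph0 | DContinuum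

definition da :: "('q, 'a) pta \<Rightarrow> degree" where
  "da A =
    (if \<exists>k::nat. k \<ge> 1 \<and> (\<forall>t. is_tree A t \<longrightarrow> finite (ACC A t) \<and> card (ACC A t) \<le> k)
     then DFin (LEAST k::nat. k \<ge> 1 \<and> (\<forall>t. is_tree A t \<longrightarrow> finite (ACC A t) \<and> card (ACC A t) \<le> k))
     else if \<forall>t. is_tree A t \<longrightarrow> finite (ACC A t) then DFinite
     else if \<forall>t. is_tree A t \<longrightarrow> countable (ACC A t) then DAleph0
     else DContinuum)"

fun degree_rank :: "degree \<Rightarrow> nat \<times> nat" where
  "degree_rank (DFin k) = (0, k)"
| "degree_rank DFinite = (1, 0)"
| "degree_rank DAleph0 = (2, 0)"
| "degree_rank DContinuum = (3, 0)"

definition degree_le :: "degree \<Rightarrow> degree \<Rightarrow> bool" where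
  "degree_le x y \<longleftrightarrow> (let (a, b) = degree_rank x; (c, d) = degree_rank y in a < c \<or> (a = c \<and> b \<le> d))"

end

theory Submission
  imports Defs
begin

lemma INFM_shift_nat: "(\<exists>\<^sub>\<infinity>n. P (n + m)) \<longleftrightarrow> (\<exists>\<^sub>\<infinity>n::nat. P n)"
proof
  assume "\<exists>\<^sub>\<infinity>n. P (n + m)"
  then show "\<exists>\<^sub>\<infinity>n::nat. P n"
    unfolding INFM_nat_le by (metis le_add1 le_trans)
next
  assume h: "\<exists>\<^sub>\<infinity>n::nat. P n"
  show "\<exists>\<^sub>\<infinity>n. P (n + m)"
    unfolding INFM_nat_le
  proof
    fix k
    obtain n where "n \<ge> k + m" "P n" using h unfolding INFM_nat_le by blast
    then show "\<exists>n\<ge>k. P (n + m)" by (intro exI[of _ "n - m"]) auto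
  qed
qed

definition graft :: "(node \<Rightarrow> 'b) \<Rightarrow> node \<Rightarrow> (node \<Rightarrow> 'b) \<Rightarrow> node \<Rightarrow> 'b" where
  "graft f v g = (\<lambda>w. if take (length v) w = v then g (drop (length v) w) else f w)"

lemma take_snoc_eq:
  assumes "take (length v) (u @ [x]) = v" "take (length v) u \<noteq> v"
  shows "u @ [x] = v"
proof (cases "length u < length v")
  case True
  then have "take (length v) (u @ [x]) = u @ [x]" by simp
  then show ?thesis using assms by simp
next
  case False
  then have "take (length v) (u @ [x]) = take (length v) u" by simp
  then show ?thesis using assms by simp
qed

lemma bn_split:
  assumes "m \<le> n"
  shows "branch_node \<pi> n = branch_node \<pi> m @ branch_node (\<lambda>i. \<pi> (i + m)) (n - m)"
proof -
  have "[0..<n] = [0..<m] @ [m..<n]" using assms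
    by (metis le0 upt_add_eq_append le_add_diff_inverse)
  moreover have "map \<pi> [m..<n] = map (\<lambda>i. \<pi> (i + m)) [0..<n - m]"
    using assms by (induction n) (auto simp: Suc_diff_le)
  ultimately show ?thesis unfolding branch_node_def by simp
qed

lemma bn_length[simp]: "length (branch_node \<pi> n) = n"
  by (simp add: branch_node_def)

lemma take_bn: "take m (branch_node \<pi> n) = branch_node \<pi> (min m n)"
  unfolding branch_node_def by (cases "m \<le> n") (simp_all add: take_map min_def)

lemma ri_simps[simp]:
  "states (restrict_init A q) = states A" "alphabet (restrict_init A q) = alphabet A"
  "delta (restrict_init A q) = delta A" "color (restrict_init A q) = color A"
  "initial (restrict_init A q) = {q}"
  by (simp_all add: restrict_init_def)

lemma ri_tree[simp]: "is_tree (restrict_init A q) t = is_tree A t"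
  by (simp add: is_tree_def)

lemma ri_acc_eq: "accepting (restrict_init A q) = accepting A"
  by (simp add: accepting_def fun_eq_iff)

lemma graft_acc:
  assumes t0: "\<phi>0 \<in> ACC A t0" and q: "\<phi>0 v0 = q"
    and psi: "\<psi> \<in> ACC (restrict_init A q) t"
  shows "graft \<phi>0 v0 \<psi> \<in> ACC A (graft t0 v0 t)"
proof -
  let ?P = "graft \<phi>0 v0 \<psi>" and ?T = "graft t0 v0 t"
  have c0: "is_computation A t0 \<phi>0" and a0: "accepting A \<phi>0" using t0 by (auto simp: ACC_def)
  have c1: "is_computation (restrict_init A q) t \<psi>" and a1: "accepting A \<psi>"
    using psi by (auto simp: ACC_def ri_acc_eq)
  have psi0: "\<psi> [] = q" using c1 by (simp add: is_computation_def)
  have Pout: "?P w = \<phi>0 w" if "take (length v0) w \<noteq> v0 \<or> w = v0" for w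
    using that psi0 q by (auto simp: graft_def)
  have Tout: "?T w = t0 w" if "take (length v0) w \<noteq> v0" for w
    using that by (auto simp: graft_def)
  have comp: "is_computation A ?T ?P"
    unfolding is_computation_def
  proof (intro conjI allI)
    fix v show "?P v \<in> states A"
      using c0 c1 by (auto simp: graft_def is_computation_def)
  next
    show "?P [] \<in> initial A"
      using c0 Pout[of "[]"] by (cases "v0 = []") (auto simp: is_computation_def)
  next
    fix u
    show "(?P u, ?T u, ?P (u @ [L]), ?P (u @ [R])) \<in> delta A"
    proof (cases "take (length v0) u = v0")
      case True
      then have "length v0 \<le> length u" by (metis length_take min.bounded_iff nle_le)
      with True have e: "take (length v0) (u @ [x]) = v0" "drop (length v0) (u @ [x]) = drop (length v0) u @ [x]" for x
        by auto
      show ?thesis using c1 True e unfolding graft_def is_computation_def by simp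
    next
      case False
      have "?P (u @ [x]) = \<phi>0 (u @ [x])" for x
        using take_snoc_eq[OF _ False, of x] by (intro Pout) blast
      then show ?thesis using c0 Pout[of u] Tout[of u] False by (simp add: is_computation_def)
    qed
  qed
  have acc: "accepting A ?P"
    unfolding accepting_def
  proof
    fix \<pi> :: "nat \<Rightarrow> dir"
    let ?m = "length v0"
    show "\<exists>c. even c \<and> (\<exists>\<^sub>\<infinity>n. color A (?P (branch_node \<pi> n)) = c) \<and>
         (\<forall>d. (\<exists>\<^sub>\<infinity>n. color A (?P (branch_node \<pi> n)) = d) \<longrightarrow> d \<le> c)"
    proof (cases "branch_node \<pi> ?m = v0")
      case True
      define \<pi>' where "\<pi>' = (\<lambda>i. \<pi> (i + ?m))"
      have eq: "?P (branch_node \<pi> (n + ?m)) = \<psi> (branch_node \<pi>' n)" for n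
        using bn_split[of ?m "n + ?m" \<pi>] True unfolding \<pi>'_def graft_def by simp
      have iff: "(\<exists>\<^sub>\<infinity>n. color A (?P (branch_node \<pi> n)) = d) \<longleftrightarrow>
                 (\<exists>\<^sub>\<infinity>n. color A (\<psi> (branch_node \<pi>' n)) = d)" for d
        using INFM_shift_nat[of "\<lambda>n. color A (?P (branch_node \<pi> n)) = d" ?m] eq by simp
      have "\<exists>c. even c \<and> (\<exists>\<^sub>\<infinity>n. color A (\<psi> (branch_node \<pi>' n)) = c) \<and>
         (\<forall>d. (\<exists>\<^sub>\<infinity>n. color A (\<psi> (branch_node \<pi>' n)) = d) \<longrightarrow> d \<le> c)"
        using a1 unfolding accepting_def by (rule spec)
      then show ?thesis by (simp only: iff)
    next
      case False
      have nt: "take ?m (branch_node \<pi> n) \<noteq> v0" for n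
      proof (cases "n \<le> ?m")
        case True
        show ?thesis
        proof
          assume h: "take ?m (branch_node \<pi> n) = v0"
          have "length (take ?m (branch_node \<pi> n)) = n" using True by simp
          with h have nm: "n = ?m" by simp
          have "take ?m (branch_node \<pi> n) = branch_node \<pi> ?m" using nm by simp
          with h False show False by simp
        qed
      next
        case False2: False
        have "min ?m n = ?m" using False2 by simp
        then have "take ?m (branch_node \<pi> n) = branch_node \<pi> ?m" by (simp only: take_bn)
        then show ?thesis using False by simp
      qed
      have "?P (branch_node \<pi> n) = \<phi>0 (branch_node \<pi> n)" for n
        by (rule Pout) (rule disjI1, rule nt)
      then have ee: "(\<lambda>n. color A (?P (branch_node \<pi> n))) = (\<lambda>n. color A (\<phi>0 (branch_node \<pi> n)))"
        by simp
      have "\<exists>c. even c \<and> (\<exists>\<^sub>\<infinity>n. color A (\<phi>0 (branch_node \<pi> n)) = c) \<and>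
         (\<forall>d. (\<exists>\<^sub>\<infinity>n. color A (\<phi>0 (branch_node \<pi> n)) = d) \<longrightarrow> d \<le> c)"
        using a0 unfolding accepting_def by (rule spec)
      then show ?thesis using ee by metis
    qed
  qed
  show ?thesis using comp acc by (simp add: ACC_def)
qed

lemma graft_inj: "inj (graft \<phi>0 v0)"
proof (rule injI)
  fix a b assume "graft \<phi>0 v0 a = graft \<phi>0 v0 b"
  then have "graft \<phi>0 v0 a (v0 @ w) = graft \<phi>0 v0 b (v0 @ w)" for w by simp
  then show "a = b" by (simp add: graft_def fun_eq_iff)
qed

lemma graft_tree:
  assumes "is_tree A t0" "is_tree A t" shows "is_tree A (graft t0 v0 t)"
  using assms by (simp add: is_tree_def graft_def)

theorem lemma3p4:
  fixes A :: "('q, 'a) pta" and q :: 'q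
  assumes "pta_wf A"
    and "q \<in> states A"
    and "useful A q"
  shows "degree_le (da (restrict_init A q)) (da A)"
proof -
  let ?B = "restrict_init A q"
  obtain t0 \<phi>0 v0 where t0: "t0 \<in> lang A" and p0: "\<phi>0 \<in> ACC A t0" and v0: "\<phi>0 v0 = q"
    using assms(3) unfolding useful_def by blast
  have tr0: "is_tree A t0" using t0 by (simp add: lang_def)
  have key: "\<exists>t'. is_tree A t' \<and> inj_on (graft \<phi>0 v0) (ACC ?B t) \<and>
               graft \<phi>0 v0 ` ACC ?B t \<subseteq> ACC A t'" if "is_tree ?B t" for t
  proof (intro exI[of _ "graft t0 v0 t"] conjI)
    show "is_tree A (graft t0 v0 t)" using that tr0 graft_tree by simp
    show "inj_on (graft \<phi>0 v0) (ACC ?B t)" using graft_inj[of \<phi>0 v0] by (simp add: inj_on_def inj_def)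
    show "graft \<phi>0 v0 ` ACC ?B t \<subseteq> ACC A (graft t0 v0 t)" using graft_acc[OF p0 v0] by blast
  qed
  have Pk: "finite (ACC ?B t) \<and> card (ACC ?B t) \<le> k"
    if h: "\<forall>t. is_tree A t \<longrightarrow> finite (ACC A t) \<and> card (ACC A t) \<le> k" and tB: "is_tree ?B t" for k t
  proof -
    obtain t' where "is_tree A t'" "inj_on (graft \<phi>0 v0) (ACC ?B t)"
      "graft \<phi>0 v0 ` ACC ?B t \<subseteq> ACC A t'" using key[OF tB] by blast
    note o = this
    have fT: "finite (ACC A t')" and cT: "card (ACC A t') \<le> k" using h o(1) by auto
    have fI: "finite (graft \<phi>0 v0 ` ACC ?B t)" using finite_subset[OF o(3) fT] .
    have fS: "finite (ACC ?B t)" using finite_imageD[OF fI o(2)] .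
    have "card (ACC ?B t) = card (graft \<phi>0 v0 ` ACC ?B t)" using card_image[OF o(2)] by simp
    also have "\<dots> \<le> card (ACC A t')" using card_mono[OF fT o(3)] .
    finally show ?thesis using fS cT by simp
  qed
  have Fin: "finite (ACC ?B t)"
    if h: "\<forall>t. is_tree A t \<longrightarrow> finite (ACC A t)" and tB: "is_tree ?B t" for t
  proof -
    obtain t' where "is_tree A t'" "inj_on (graft \<phi>0 v0) (ACC ?B t)"
      "graft \<phi>0 v0 ` ACC ?B t \<subseteq> ACC A t'" using key[OF tB] by blast
    then show ?thesis using h by (metis finite_imageD finite_subset)
  qed
  have Cnt: "countable (ACC ?B t)"
    if h: "\<forall>t. is_tree A t \<longrightarrow> countable (ACC A t)" and tB: "is_tree ?B t" for t
  proof -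
    obtain t' where "is_tree A t'" "inj_on (graft \<phi>0 v0) (ACC ?B t)"
      "graft \<phi>0 v0 ` ACC ?B t \<subseteq> ACC A t'" using key[OF tB] by blast
    then show ?thesis using h by (metis countable_image_inj_on countable_subset)
  qed
  show ?thesis
  proof (cases "da A")
    case (DFin k)
    let ?Q = "\<lambda>X k. k \<ge> 1 \<and> (\<forall>t. is_tree X t \<longrightarrow> finite (ACC X t) \<and> card (ACC X t) \<le> k)"
    have ex: "\<exists>k. ?Q A k" and kk: "k = (LEAST k. ?Q A k)"
      using DFin unfolding da_def by (auto split: if_splits)
    have QA: "?Q A k" unfolding kk by (rule LeastI_ex[OF ex])
    then have QB: "?Q ?B k" using Pk by auto
    then have exB: "\<exists>k. ?Q ?B k" by blast
    have "da ?B = DFin (LEAST k. ?Q ?B k)" unfolding da_def by (rule if_P[OF exB])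
    moreover have "(LEAST k. ?Q ?B k) \<le> k" using QB by (rule Least_le)
    ultimately show ?thesis using DFin by (simp add: degree_le_def)
  next
    case DFinite
    then have "\<forall>t. is_tree A t \<longrightarrow> finite (ACC A t)" unfolding da_def by (auto split: if_splits)
    then have "\<forall>t. is_tree ?B t \<longrightarrow> finite (ACC ?B t)" using Fin by blast
    then have "da ?B \<noteq> DAleph0 \<and> da ?B \<noteq> DContinuum" unfolding da_def by auto
    then show ?thesis using DFinite by (cases "da ?B") (auto simp: degree_le_def)
  next
    case DAleph0
    then have "\<forall>t. is_tree A t \<longrightarrow> countable (ACC A t)" unfolding da_def by (auto split: if_splits)
    then have "\<forall>t. is_tree ?B t \<longrightarrow> countable (ACC ?B t)" using Cnt by blast
    then have "da ?B \<noteq> DContinuum" unfolding da_def by auto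
    then show ?thesis using DAleph0 by (cases "da ?B") (auto simp: degree_le_def)
  next
    case DContinuum
    then show ?thesis by (cases "da ?B") (auto simp: degree_le_def)
  qed
qed

end
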